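(* Let $K$ be a connected 4-regular simple graph with an odd number of vertices, let $v,w$ be adjacent vertices of $K$ having exactly one common neighbour $c$, let the neighbours of $w$ be $v,a,b,c$ and the neighbours of $v$ be $w,c,d,e$, and let $S=K-\{v,w\}$. Let $\sigma$ be a bipartition of the edges of $S$ such that each part is the edge set of a spanning forest of $S$ (possibly with a single tree) in which every tree contains at least one of $a,b,d,e$. Then of the two edges of $S$ incident to $c$ exactly one lies in each part of $\sigma$, and swapping which parts these two edges are in yields a new bipartition $\sigma'$ of $E(S)$ which again has the property that each part is the edge set of a spanning forest of $S$ in which every tree contains at least one of $a,b,d,e$ (though the vertices need not be distributed among the trees in the same way).
   Context: $K-\{v,w\}$ denotes $K$ with $v$, $w$ and their incident edges removed; in $S$ the vertex $c$ has degree 2. *)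

theory Defs
  imports Main
begin

definition simple_graph :: "'a set \<Rightarrow> 'a set set \<Rightarrow> bool" where
  "simple_graph V E \<longleftrightarrow> finite V \<and>
     (\<forall>e\<in>E. \<exists>x y. x \<in> V \<and> y \<in> V \<and> x \<noteq> y \<and> e = {x, y})"

definition nbrs :: "'a set set \<Rightarrow> 'a \<Rightarrow> 'a set" where
  "nbrs E x = {y. {x, y} \<in> E}"

definition regular :: "nat \<Rightarrow> 'a set \<Rightarrow> 'a set set \<Rightarrow> bool" where
  "regular k V E \<longleftrightarrow> (\<forall>x\<in>V. card {e\<in>E. x \<in> e} = k)"

definition reachable :: "'a set set \<Rightarrow> 'a \<Rightarrow> 'a \<Rightarrow> bool" where
  "reachable E = (\<lambda>x y. {x, y} \<in> E)\<^sup>*\<^sup>*"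

definition connected_graph :: "'a set \<Rightarrow> 'a set set \<Rightarrow> bool" where
  "connected_graph V E \<longleftrightarrow> (\<forall>x\<in>V. \<forall>y\<in>V. reachable E x y)"

definition del_verts_V :: "'a set \<Rightarrow> 'a set \<Rightarrow> 'a set" where
  "del_verts_V V X = V - X"

definition del_verts_E :: "'a set set \<Rightarrow> 'a set \<Rightarrow> 'a set set" where
  "del_verts_E E X = {e\<in>E. e \<inter> X = {}}"

definition has_cycle :: "'a set set \<Rightarrow> bool" where
  "has_cycle F \<longleftrightarrow> (\<exists>xs. length xs \<ge> 3 \<and> distinct xs \<and>
      (\<forall>i. Suc i < length xs \<longrightarrow> {xs ! i, xs ! Suc i} \<in> F) \<and>
      {last xs, hd xs} \<in> F)"

text \<open>F is the edge set of a spanning forest of (V,E): F is an acyclic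
  subset of E (spanning: all of V is the vertex set).\<close>
definition spanning_forest :: "'a set \<Rightarrow> 'a set set \<Rightarrow> 'a set set \<Rightarrow> bool" where
  "spanning_forest V E F \<longleftrightarrow> F \<subseteq> E \<and> \<not> has_cycle F"

definition rooted_forest :: "'a set \<Rightarrow> 'a set set \<Rightarrow> 'a set \<Rightarrow> 'a set set \<Rightarrow> bool" where
  "rooted_forest V E T F \<longleftrightarrow> spanning_forest V E F \<and>
     (\<forall>x\<in>V. \<exists>t\<in>T. reachable F x t)"

end

theory Submission
  imports Defs
begin

lemma reach_swap:
  assumes F1sub: "\<forall>f\<in>F1. c \<in> f \<longrightarrow> f = {c,x}"
    and sub: "F1 - {{c,x}} \<subseteq> F'" and cx: "{c,x} \<in> F1" 
    and r: "reachable F1 u t" and tc: "t \<noteq> c"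
  shows "(u = c \<longrightarrow> reachable F' x t) \<and> (u \<noteq> c \<longrightarrow> reachable F' u t)"
  using r[unfolded reachable_def]
proof (induction rule: converse_rtranclp_induct)
  case base
  then show ?case using tc by (simp add: reachable_def)
next
  case (step u u')
  show ?case
  proof (cases "u = c")
    case True
    then show ?thesis
    proof (cases "u' = c")
      case True thus ?thesis using step \<open>u = c\<close> by simp
    next
      case False
      have "{c,u'} = {c,x}" using F1sub step(1) True by auto
      hence "u' = x" by (auto simp: doubleton_eq_iff)
      thus ?thesis using step False \<open>u = c\<close> by simp
    qed
  next
    case False
    then show ?thesis
    proof (cases "u' = c")
      case True
      have "{u,c} = {c,x}" using F1sub step(1) True by auto
      hence "u = x" using False by (auto simp: doubleton_eq_iff)
      thus ?thesis using step True False by simp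
    next
      case False2: False
      have "{u,u'} \<noteq> {c,x}" using \<open>u \<noteq> c\<close> False2 by (auto simp: doubleton_eq_iff)
      hence "{u,u'} \<in> F'" using sub step(1) by auto
      moreover have "reachable F' u' t" using step(3) False2 by simp
      ultimately show ?thesis using \<open>u \<noteq> c\<close> unfolding reachable_def
        by (meson converse_rtranclp_into_rtranclp)
    qed
  qed
qed

lemma cyc_swap:
  assumes cyc: "has_cycle F'"
    and deg: "\<And>z. {c,z} \<in> F' \<Longrightarrow> z = y"
    and nc: "\<And>f. f \<in> F' \<Longrightarrow> c \<notin> f \<Longrightarrow> f \<in> F1"
  shows "has_cycle F1"
proof -
  obtain xs where len: "length xs \<ge> 3" and dist: "distinct xs"
    and ed: "\<forall>i. Suc i < length xs \<longrightarrow> {xs ! i, xs ! Suc i} \<in> F'"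
    and cl: "{last xs, hd xs} \<in> F'" using cyc unfolding has_cycle_def by blast
  have lastx: "last xs = xs ! (length xs - 1)" using len by (metis last_conv_nth list.size(3) not_numeral_le_zero)
  have hdx: "hd xs = xs ! 0" using len by (metis hd_conv_nth list.size(3) not_numeral_le_zero)
  have deg2: "\<And>z. {z,c} \<in> F' \<Longrightarrow> z = y" using deg by (simp add: insert_commute)
  have "c \<notin> set xs"
  proof
    assume "c \<in> set xs"
    then obtain i where i: "i < length xs" "xs ! i = c" by (auto simp: in_set_conv_nth)
    consider "i = 0" | "i = length xs - 1" | "0 < i \<and> i < length xs - 1" using i by linarith
    then show False
    proof cases
      case 1
      have "xs ! 1 = y" using ed[rule_format, of 0] len deg i 1 by auto
      moreover have "xs ! (length xs - 1) = y" using cl deg2 i 1 hdx lastx by auto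
      ultimately have "xs ! 1 = xs ! (length xs - 1)" by simp
      moreover have "1 < length xs" "length xs - 1 < length xs" "1 \<noteq> length xs - 1" using len by auto
      ultimately show False using nth_eq_iff_index_eq[OF dist] by blast
    next
      case 2
      have s: "Suc (length xs - 2) = length xs - 1" using len by auto
      have "xs ! (length xs - 2) = y" using ed[rule_format, of "length xs - 2"] len deg2 i 2 s
        by auto
      moreover have "xs ! 0 = y" using cl deg i 2 hdx lastx by auto
      ultimately have "xs ! 0 = xs ! (length xs - 2)" by simp
      moreover have "0 < length xs" "length xs - 2 < length xs" "0 \<noteq> length xs - 2" using len by auto
      ultimately show False using nth_eq_iff_index_eq[OF dist] by blast
    next
      case 3
      have s: "Suc (i - 1) = i" using 3 by auto
      have "xs ! (i - 1) = y" using ed[rule_format, of "i - 1"] 3 deg2 i s by auto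
      moreover have "xs ! (Suc i) = y" using ed[rule_format, of "i"] 3 deg i by auto
      ultimately have "xs ! (i - 1) = xs ! Suc i" by simp
      moreover have "i - 1 < length xs" "Suc i < length xs" "i - 1 \<noteq> Suc i" using 3 by auto
      ultimately show False using nth_eq_iff_index_eq[OF dist] by blast
    qed
  qed
  have "\<forall>i. Suc i < length xs \<longrightarrow> {xs ! i, xs ! Suc i} \<in> F1"
  proof (intro allI impI)
    fix i assume "Suc i < length xs"
    moreover hence "c \<notin> {xs ! i, xs ! Suc i}" using \<open>c \<notin> set xs\<close> by auto
    ultimately show "{xs ! i, xs ! Suc i} \<in> F1" using ed nc by auto
  qed
  moreover have "{last xs, hd xs} \<in> F1" proof -
    have "xs \<noteq> []" using len by auto
    hence "c \<notin> {last xs, hd xs}" using \<open>c \<notin> set xs\<close> by auto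
    thus ?thesis using nc cl by blast
  qed
  ultimately show ?thesis using len dist unfolding has_cycle_def by blast
qed

lemma swap_rooted:
  assumes rf: "rooted_forest V' E' T F1" and cT: "c \<notin> T"
    and cE: "\<forall>f\<in>E'. c \<in> f \<longrightarrow> f = {c,x} \<or> f = {c,y}"
    and x1: "{c,x} \<in> F1" and y1: "{c,y} \<in> E'" "{c,y} \<notin> F1"
    and yV: "y \<in> V'" and yc: "y \<noteq> c"
  shows "rooted_forest V' E' T (F1 - {{c,x}} \<union> {{c,y}})"
proof -
  define F' where "F' = F1 - {{c,x}} \<union> {{c,y}}"
  have sub: "F1 \<subseteq> E'" and ac: "\<not> has_cycle F1" and rt: "\<forall>u\<in>V'. \<exists>t\<in>T. reachable F1 u t"
    using rf unfolding rooted_forest_def spanning_forest_def by auto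
  have F1sub: "\<forall>f\<in>F1. c \<in> f \<longrightarrow> f = {c,x}" using cE sub y1 by blast
  have deg: "\<And>z. {c,z} \<in> F' \<Longrightarrow> z = y"
  proof -
    fix z assume "{c,z} \<in> F'"
    hence "{c,z} = {c,y}" using F1sub unfolding F'_def by auto
    thus "z = y" by (auto simp: doubleton_eq_iff)
  qed
  have nc: "\<And>f. f \<in> F' \<Longrightarrow> c \<notin> f \<Longrightarrow> f \<in> F1" unfolding F'_def by auto
  have "\<not> has_cycle F'" using cyc_swap[of F' c y F1] deg nc ac by blast
  moreover have "F' \<subseteq> E'" using sub y1 unfolding F'_def by auto
  moreover have "\<forall>u\<in>V'. \<exists>t\<in>T. reachable F' u t"
  proof
    fix u assume u: "u \<in> V'"
    have sub': "F1 - {{c,x}} \<subseteq> F'" unfolding F'_def by auto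
    show "\<exists>t\<in>T. reachable F' u t"
    proof (cases "u = c")
      case False
      then obtain t where t: "t \<in> T" "reachable F1 u t" using rt u by blast
      hence "t \<noteq> c" using cT by auto
      thus ?thesis using reach_swap[OF F1sub sub' x1 t(2)] False t(1) by blast
    next
      case True
      obtain t where t: "t \<in> T" "reachable F1 y t" using rt yV by blast
      hence "t \<noteq> c" using cT by auto
      hence "reachable F' y t" using reach_swap[OF F1sub sub' x1 t(2)] yc by blast
      moreover have "{c,y} \<in> F'" unfolding F'_def by auto
      ultimately have "reachable F' c t" unfolding reachable_def
        by (meson converse_rtranclp_into_rtranclp)
      thus ?thesis using True t(1) by blast
    qed
  qed
  ultimately show ?thesis unfolding F'_def rooted_forest_def spanning_forest_def by auto
qed

lemma two_elem: "c \<in> {p,q} \<Longrightarrow> v \<in> {p,q} \<Longrightarrow> c \<noteq> v \<Longrightarrow> {p,q} = {c,v}"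
  by auto
lemma two_elem2: "p \<noteq> q \<Longrightarrow> c \<in> {p,q} \<Longrightarrow> \<exists>z. {p,q} = {c,z} \<and> z \<in> {p,q} \<and> z \<noteq> c"
  by auto
lemma sg_single: "{z} = {x,y} \<Longrightarrow> x \<noteq> y \<Longrightarrow> False" by (metis insert_iff singletonD)
lemma nbr_card:
  assumes sg: "\<And>f. f \<in> E \<Longrightarrow> \<exists>x y. x \<in> V \<and> y \<in> V \<and> x \<noteq> y \<and> f = {x, y}"
    and reg: "regular 4 V E" and z: "z \<in> V"
  shows "card (nbrs E z) = 4"
proof -
  have nz: "p \<noteq> z" if "p \<in> nbrs E z" for p
  proof
    assume "p = z"
    hence "{z} \<in> E" using that unfolding nbrs_def by simp
    then obtain x y where "x \<noteq> y" "{z} = {x,y}" using sg by blast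
    thus False using sg_single[of z x y] by simp
  qed
  have "{f\<in>E. z \<in> f} = (\<lambda>y. {z,y}) ` nbrs E z"
  proof (rule set_eqI, rule iffI)
    fix f assume f: "f \<in> {f\<in>E. z \<in> f}"
    then obtain p q where pq: "f \<in> E" "z \<in> f" "f = {p,q}" using sg by blast
    show "f \<in> (\<lambda>y. {z,y}) ` nbrs E z"
    proof (cases "z = p")
      case True
      hence "f = {z,q}" using pq by simp
      thus ?thesis using pq unfolding nbrs_def by (intro image_eqI[of _ _ q]) auto
    next
      case False
      hence "z = q" using pq by auto
      hence "f = {z,p}" using pq by (simp add: insert_commute)
      thus ?thesis using pq unfolding nbrs_def by (intro image_eqI[of _ _ p]) auto
    qed
  next
    fix f assume "f \<in> (\<lambda>y. {z,y}) ` nbrs E z"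
    thus "f \<in> {f\<in>E. z \<in> f}" unfolding nbrs_def by blast
  qed
  moreover have "inj_on (\<lambda>y. {z,y}) (nbrs E z)"
  proof (rule inj_onI)
    fix p q assume h: "p \<in> nbrs E z" "q \<in> nbrs E z" "{z,p} = {z,q}"
    have "p \<noteq> z" "q \<noteq> z" using nz h by auto
    thus "p = q" using h(3) by (auto simp: doubleton_eq_iff)
  qed
  ultimately have "card {f\<in>E. z \<in> f} = card (nbrs E z)" by (simp add: card_image)
  moreover have "card {f\<in>E. z \<in> f} = 4" using reg z unfolding regular_def by blast
  ultimately show ?thesis by simp
qed

theorem lemma4p1:
  fixes V :: "'a set" and E :: "'a set set" and v w a b c d e :: 'a
    and F1 F2 :: "'a set set"
  assumes "simple_graph V E" and "connected_graph V E" and "regular 4 V E"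
    and "odd (card V)"
    and "v \<in> V" and "w \<in> V" and "{v, w} \<in> E"
    and "nbrs E v \<inter> nbrs E w = {c}"
    and "nbrs E w = {v, a, b, c}" and "nbrs E v = {w, c, d, e}"
    and "F1 \<union> F2 = del_verts_E E {v, w}" and "F1 \<inter> F2 = {}"
    and "rooted_forest (del_verts_V V {v, w}) (del_verts_E E {v, w}) {a, b, d, e} F1"
    and "rooted_forest (del_verts_V V {v, w}) (del_verts_E E {v, w}) {a, b, d, e} F2"
  shows "\<exists>e1 e2. e1 \<noteq> e2 \<and> {x \<in> del_verts_E E {v, w}. c \<in> x} = {e1, e2}
           \<and> ((e1 \<in> F1 \<and> e2 \<in> F2) \<or> (e1 \<in> F2 \<and> e2 \<in> F1))
           \<and> (\<forall>f1 f2. f1 \<in> F1 \<and> f2 \<in> F2 \<and> {f1, f2} = {e1, e2} \<longrightarrow>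
                rooted_forest (del_verts_V V {v, w}) (del_verts_E E {v, w}) {a, b, d, e}
                   (F1 - {f1} \<union> {f2})
              \<and> rooted_forest (del_verts_V V {v, w}) (del_verts_E E {v, w}) {a, b, d, e}
                   (F2 - {f2} \<union> {f1}))"
proof -
  note A = assms
  define V' where "V' = del_verts_V V {v, w}"
  define E' where "E' = del_verts_E E {v, w}"
  have sg: "\<And>f. f \<in> E \<Longrightarrow> \<exists>x y. x \<in> V \<and> y \<in> V \<and> x \<noteq> y \<and> f = {x, y}"
    using A(1) unfolding simple_graph_def by blast
  have nbr_card: "\<And>z. z \<in> V \<Longrightarrow> card (nbrs E z) = 4"
    using nbr_card[OF sg A(3)] by blast
  have cw: "card {v, a, b, c} = 4" using nbr_card[OF A(6)] A(9) by simp
  have cv: "card {w, c, d, e} = 4" using nbr_card[OF A(5)] A(10) by simp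
  have dist1: "c \<noteq> v" "c \<noteq> a" "c \<noteq> b" using cw
    by (auto simp: card_insert_if split: if_splits)
  have dist2: "c \<noteq> w" "c \<noteq> d" "c \<noteq> e" using cv
    by (auto simp: card_insert_if split: if_splits)
  have vw: "v \<noteq> w" using A(7) sg by (metis doubleton_eq_iff insert_absorb2)
  have cvE: "{c,v} \<in> E" using A(10) unfolding nbrs_def by (auto simp: insert_commute)
  have cwE: "{c,w} \<in> E" using A(9) unfolding nbrs_def by (auto simp: insert_commute)
  have cV: "c \<in> V" using sg[OF cvE] by (auto simp: doubleton_eq_iff)
  have cV': "c \<in> V'" using cV dist1 dist2 unfolding V'_def del_verts_V_def by auto
  have Ec: "card {f\<in>E. c \<in> f} = 4" using A(3) cV unfolding regular_def by auto
  define C where "C = {f \<in> E'. c \<in> f}"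
  have Ceq: "C = {f\<in>E. c \<in> f} - {{c,v},{c,w}}"
  proof (rule set_eqI, rule iffI)
    fix f assume "f \<in> C"
    thus "f \<in> {f\<in>E. c \<in> f} - {{c,v},{c,w}}"
      unfolding C_def E'_def del_verts_E_def by auto
  next
    fix f assume f: "f \<in> {f\<in>E. c \<in> f} - {{c,v},{c,w}}"
    then obtain p q where pq: "p \<in> V" "q \<in> V" "p \<noteq> q" "f = {p,q}" using sg by blast
    have fc: "c \<in> f" "f \<noteq> {c,v}" "f \<noteq> {c,w}" using f by auto
    have "v \<notin> f"
    proof
      assume "v \<in> f" thus False using two_elem[of c p q v] fc pq dist1 by auto
    qed
    moreover have "w \<notin> f"
    proof
      assume "w \<in> f" thus False using two_elem[of c p q w] fc pq dist2 by auto
    qed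
    ultimately have "f \<inter> {v,w} = {}" by auto
    thus "f \<in> C" using f unfolding C_def E'_def del_verts_E_def by auto
  qed
  have fin: "finite {f\<in>E. c \<in> f}" using Ec by (metis card.infinite zero_neq_numeral)
  have "card C = 2" unfolding Ceq using Ec fin cvE cwE vw dist1 dist2
    by (subst card_Diff_subset) (auto simp: doubleton_eq_iff)
  then obtain e1 e2 where e12: "C = {e1, e2}" "e1 \<noteq> e2" by (auto simp: card_2_iff)
  have Cform: "\<And>f. f \<in> C \<Longrightarrow> \<exists>z. f = {c,z} \<and> z \<in> V' \<and> z \<noteq> c"
  proof -
    fix f assume f: "f \<in> C"
    hence fE: "f \<in> E" "c \<in> f" "f \<inter> {v,w} = {}" unfolding C_def E'_def del_verts_E_def by auto
    then obtain p q where pq: "p \<in> V" "q \<in> V" "p \<noteq> q" "f = {p,q}" using sg by blast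
    obtain z where z: "f = {c,z}" "z \<in> {p,q}" "z \<noteq> c" using two_elem2[of p q c] pq fE by auto
    have "z \<in> V" using z pq by auto
    moreover have "z \<notin> {v,w}" using z fE by auto
    ultimately show "\<exists>z. f = {c,z} \<and> z \<in> V' \<and> z \<noteq> c" using z unfolding V'_def del_verts_V_def by auto
  qed
  have cT: "c \<notin> {a, b, d, e}" using dist1 dist2 by auto
  have F1s: "F1 \<subseteq> E'" and F2s: "F2 \<subseteq> E'" using A(13,14) unfolding E'_def rooted_forest_def spanning_forest_def by auto
  have noiso: "\<And>F. rooted_forest V' E' {a, b, d, e} F \<Longrightarrow> \<exists>f\<in>F. c \<in> f"
  proof -
    fix F assume "rooted_forest V' E' {a, b, d, e} F"
    then obtain t where t: "t \<in> {a,b,d,e}" "reachable F c t" using cV' unfolding rooted_forest_def by blast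
    hence "c \<noteq> t" using cT by auto
    have rr: "(\<lambda>x y. {x,y} \<in> F)\<^sup>*\<^sup>* c t" using t(2) unfolding reachable_def .
    have "\<exists>z. {c,z} \<in> F" using converse_rtranclpE[OF rr] \<open>c \<noteq> t\<close> by blast
    then obtain z where "{c,z} \<in> F" by blast
    thus "\<exists>f\<in>F. c \<in> f" by blast
  qed
  have inF: "\<And>F. F \<subseteq> E' \<Longrightarrow> f \<in> F \<Longrightarrow> c \<in> f \<Longrightarrow> f \<in> C" for f unfolding C_def by auto
  have split: "(e1 \<in> F1 \<and> e2 \<in> F2) \<or> (e1 \<in> F2 \<and> e2 \<in> F1)"
  proof -
    have "e1 \<in> E'" "e2 \<in> E'" using e12 unfolding C_def by auto
    hence u: "e1 \<in> F1 \<union> F2" "e2 \<in> F1 \<union> F2" using A(11) unfolding E'_def by auto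
    obtain f1 where f1: "f1 \<in> F1" "c \<in> f1" using noiso A(13) unfolding V'_def E'_def by blast
    obtain f2 where f2: "f2 \<in> F2" "c \<in> f2" using noiso A(14) unfolding V'_def E'_def by blast
    have "f1 \<in> C" "f2 \<in> C" using inF F1s F2s f1 f2 by blast+
    moreover have "f1 \<noteq> f2" using f1 f2 A(12) by auto
    ultimately have "(f1 = e1 \<and> f2 = e2) \<or> (f1 = e2 \<and> f2 = e1)" using e12 by auto
    thus ?thesis using f1 f2 by blast
  qed
  have main: "\<forall>f1 f2. f1 \<in> F1 \<and> f2 \<in> F2 \<and> {f1, f2} = {e1, e2} \<longrightarrow>
                rooted_forest V' E' {a, b, d, e} (F1 - {f1} \<union> {f2})
              \<and> rooted_forest V' E' {a, b, d, e} (F2 - {f2} \<union> {f1})"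
  proof (intro allI impI)
    fix f1 f2 assume h: "f1 \<in> F1 \<and> f2 \<in> F2 \<and> {f1, f2} = {e1, e2}"
    have Cf: "C = {f1, f2}" using h e12 by auto
    have n12: "f1 \<notin> F2" "f2 \<notin> F1" using h A(12) by auto
    obtain x where x: "f1 = {c,x}" "x \<in> V'" "x \<noteq> c" using Cform Cf by blast
    obtain y where y: "f2 = {c,y}" "y \<in> V'" "y \<noteq> c" using Cform Cf by blast
    have cE: "\<forall>f\<in>E'. c \<in> f \<longrightarrow> f = {c,x} \<or> f = {c,y}" using Cf x y unfolding C_def by auto
    have cE': "\<forall>f\<in>E'. c \<in> f \<longrightarrow> f = {c,y} \<or> f = {c,x}" using cE by blast
    have E1: "f2 \<in> E'" "f1 \<in> E'" using Cf unfolding C_def by auto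
    have r1: "rooted_forest V' E' {a, b, d, e} F1" "rooted_forest V' E' {a, b, d, e} F2"
      using A(13,14) unfolding V'_def E'_def by auto
    show "rooted_forest V' E' {a, b, d, e} (F1 - {f1} \<union> {f2})
              \<and> rooted_forest V' E' {a, b, d, e} (F2 - {f2} \<union> {f1})"
      using swap_rooted[OF r1(1) cT cE] swap_rooted[OF r1(2) cT cE'] h n12 x y E1 by auto
  qed
  show ?thesis
    apply (rule exI[of _ e1], rule exI[of _ e2])
    using e12 split main unfolding C_def E'_def V'_def by blast
qed

end
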